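(* Let $D$ be a pre-divergence on a Polish space $\mathcal{X}$ and $c$ a cost function such that (1) whenever $\mu_n,\mu\in\mathcal{P}(\mathcal{X})$ satisfy $D(\mu_n\|\mu)\to0$, then $\mu_n\to\mu$ weakly; and (2) $c(x_1,x_2)=0$ if and only if $x_1=x_2$. Then $D^c$ has the divergence property: for all $\mu,\nu\in\mathcal{P}(\mathcal{X})$, $D^c(\nu\|\mu)=0$ if and only if $\nu=\mu$.
   Context: $\mathcal{P}(\mathcal{X})$ is the set of Borel probability measures on the Polish space $\mathcal{X}$, with the weak convergence topology. A pre-divergence is $D:\mathcal{P}(\mathcal{X})\times\mathcal{P}(\mathcal{X})\to[0,\infty]$ with $D(\mu\|\mu)=0$ for all $\mu$. A cost function is a lower semicontinuous $c:\mathcal{X}\times\mathcal{X}\to[0,\infty]$, with OT cost $C(\mu,\nu)=\inf\{\int c\,d\pi:\pi\in\mathcal{P}(\mathcal{X}\times\mathcal{X}),\pi_1=\mu,\pi_2=\nu\}$. $D^c(\nu\|\mu)=\inf_{\eta\in\mathcal{P}(\mathcal{X})}\{D(\eta\|\mu)+C(\eta,\nu)\}$. *)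

theory Defs
  imports "HOL-Probability.Probability"
begin

definition prob_measures :: "'a::topological_space measure set" where
  "prob_measures = {M. prob_space M \<and> sets M = sets (borel :: 'a measure)}"

definition weak_conv :: "(nat \<Rightarrow> 'a::topological_space measure) \<Rightarrow> 'a measure \<Rightarrow> bool" where
  "weak_conv Ms M \<longleftrightarrow>
     (\<forall>f :: 'a \<Rightarrow> real. continuous_on UNIV f \<and> bounded (range f) \<longrightarrow>
        (\<lambda>n. integral\<^sup>L (Ms n) f) \<longlonglongrightarrow> integral\<^sup>L M f)"

definition pre_divergence :: "('a::topological_space measure \<Rightarrow> 'a measure \<Rightarrow> ennreal) \<Rightarrow> bool" where
  "pre_divergence D \<longleftrightarrow> (\<forall>\<mu>\<in>prob_measures. D \<mu> \<mu> = 0)"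

definition lsc :: "('b::topological_space \<Rightarrow> ennreal) \<Rightarrow> bool" where
  "lsc f \<longleftrightarrow> (\<forall>t. open {x. t < f x})"

definition couplings :: "'a::topological_space measure \<Rightarrow> 'a measure \<Rightarrow> ('a \<times> 'a) measure set" where
  "couplings \<mu> \<nu> = {\<pi>. \<pi> \<in> prob_measures \<and> distr \<pi> borel fst = \<mu> \<and> distr \<pi> borel snd = \<nu>}"

definition OT_cost :: "('a::topological_space \<times> 'a \<Rightarrow> ennreal) \<Rightarrow> 'a measure \<Rightarrow> 'a measure \<Rightarrow> ennreal" where
  "OT_cost c \<mu> \<nu> = (INF \<pi>\<in>couplings \<mu> \<nu>. \<integral>\<^sup>+ z. c z \<partial>\<pi>)"

definition D_c :: "('a::topological_space measure \<Rightarrow> 'a measure \<Rightarrow> ennreal) \<Rightarrow> ('a \<times> 'a \<Rightarrow> ennreal)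
                  \<Rightarrow> 'a measure \<Rightarrow> 'a measure \<Rightarrow> ennreal" where
  "D_c D c \<nu> \<mu> = (INF \<eta>\<in>prob_measures. D \<eta> \<mu> + OT_cost c \<eta> \<nu>)"

end

theory Submission
  imports Defs
begin

lemma pm_prob: "P \<in> prob_measures \<Longrightarrow> prob_space P"
  by (simp add: prob_measures_def)

lemma pm_sets: "P \<in> prob_measures \<Longrightarrow> sets P = sets borel"
  by (simp add: prob_measures_def)

lemma pm_space: "P \<in> prob_measures \<Longrightarrow> space P = UNIV"
  by (metis pm_sets sets_eq_imp_space_eq space_borel)

lemma pm_meas:
  assumes "P \<in> prob_measures" "f \<in> borel_measurable borel"
  shows "f \<in> borel_measurable P"
  using assms(2) by (subst measurable_cong_sets[OF pm_sets[OF assms(1)] refl])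

lemma pm_cont:
  fixes f :: "'a::topological_space \<Rightarrow> real"
  assumes "P \<in> prob_measures" "continuous_on UNIV f"
  shows "f \<in> borel_measurable P"
  using assms pm_meas borel_measurable_continuous_onI by blast

lemma pm_integrable:
  fixes f :: "'a::topological_space \<Rightarrow> real"
  assumes "P \<in> prob_measures" "f \<in> borel_measurable P" "\<And>x. \<bar>f x\<bar> \<le> B"
  shows "integrable P f"
proof -
  interpret prob_space P using pm_prob[OF assms(1)] .
  show ?thesis by (rule integrable_const_bound[where B=B]) (use assms in auto)
qed

lemma lsc_meas:
  fixes c :: "'a::topological_space \<Rightarrow> ennreal"
  assumes "lsc c" shows "c \<in> borel_measurable borel"
  by (rule borel_measurableI_greater) (use assms in \<open>auto simp: lsc_def\<close>)

lemma pm_distr_id: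
  assumes "P \<in> prob_measures"
  shows "distr P borel (\<lambda>x. x) = P"
proof (rule measure_eqI)
  show "sets (distr P borel (\<lambda>x. x)) = sets P" using pm_sets[OF assms] by simp
next
  fix A assume "A \<in> sets (distr P borel (\<lambda>x. x))"
  then have A: "A \<in> sets borel" by simp
  have m: "(\<lambda>x. x) \<in> P \<rightarrow>\<^sub>M borel" by (rule measurable_ident_sets[OF pm_sets[OF assms]])
  have "emeasure (distr P borel (\<lambda>x. x)) A = emeasure P ((\<lambda>x. x) -` A \<inter> space P)"
    by (rule emeasure_distr[OF m A])
  then show "emeasure (distr P borel (\<lambda>x. x)) A = emeasure P A"
    using pm_space[OF assms] by simp
qed

lemma infdist_lessE:
  assumes "K \<noteq> {}" "infdist x K < r"
  obtains a where "a \<in> K" "dist x a < r"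
  using assms by (auto simp: infdist_notempty cINF_less_iff)

lemma sep_lemma:
  fixes c :: "'a::metric_space \<times> 'a \<Rightarrow> ennreal"
  assumes lsc: "lsc c" and diag: "\<And>x1 x2. c (x1, x2) = 0 \<longleftrightarrow> x1 = x2"
    and K: "compact K" "K \<noteq> {}" and dpos: "\<delta> > 0"
  shows "\<exists>r>0. \<exists>m>0. \<forall>x y. infdist x K < r \<longrightarrow> infdist y K < r \<longrightarrow> \<delta> \<le> dist x y
            \<longrightarrow> ennreal m \<le> c (x, y)"
proof (rule ccontr)
  assume H: "\<not> ?thesis"
  have "\<forall>n::nat. \<exists>x y. infdist x K < 1 / Suc n \<and> infdist y K < 1 / Suc n \<and> \<delta> \<le> dist x y
           \<and> c (x, y) < ennreal (1 / Suc n)"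
  proof
    fix n :: nat
    have p: "(1::real) / Suc n > 0" by simp
    show "\<exists>x y. infdist x K < 1 / Suc n \<and> infdist y K < 1 / Suc n \<and> \<delta> \<le> dist x y
           \<and> c (x, y) < ennreal (1 / Suc n)"
    proof -
      from H have "\<not> (\<forall>x y. infdist x K < 1 / Suc n \<longrightarrow> infdist y K < 1 / Suc n \<longrightarrow> \<delta> \<le> dist x y
            \<longrightarrow> ennreal (1 / Suc n) \<le> c (x, y))" using p by blast
      then show ?thesis by (auto simp: not_le)
    qed
  qed
  then obtain x y where xy: "\<And>n. infdist (x n) K < 1 / Suc n" "\<And>n. infdist (y n) K < 1 / Suc n"
     "\<And>n. \<delta> \<le> dist (x n) (y n)" "\<And>n. c (x n, y n) < ennreal (1 / Suc n)"
    by metis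
  have "\<forall>n. \<exists>a\<in>K. dist (x n) a < 1 / Suc n" using xy(1) infdist_lessE[OF K(2)] by metis
  then obtain a where a: "\<And>n. a n \<in> K" "\<And>n. dist (x n) (a n) < 1 / Suc n" by metis
  have "\<forall>n. \<exists>b\<in>K. dist (y n) b < 1 / Suc n" using xy(2) infdist_lessE[OF K(2)] by metis
  then obtain b where b: "\<And>n. b n \<in> K" "\<And>n. dist (y n) (b n) < 1 / Suc n" by metis
  have "seq_compact (K \<times> K)" using K(1) by (intro compact_imp_seq_compact compact_Times)
  moreover have "\<forall>n. (a n, b n) \<in> K \<times> K" using a b by auto
  ultimately obtain l r where l: "l \<in> K \<times> K" "strict_mono r" "((\<lambda>n. (a n, b n)) \<circ> r) \<longlonglongrightarrow> l"
    by (rule seq_compactE)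
  have lim0: "(\<lambda>n. 1 / real (Suc (r n))) \<longlonglongrightarrow> 0"
  proof -
    have "(\<lambda>n. 1 / real (Suc n)) \<longlonglongrightarrow> 0"
      using LIMSEQ_Suc[OF lim_1_over_n] by simp
    then show ?thesis using LIMSEQ_subseq_LIMSEQ[OF _ l(2)] by (simp add: o_def)
  qed
  have la: "(\<lambda>n. a (r n)) \<longlonglongrightarrow> fst l" using tendsto_fst[OF l(3)] by (simp add: o_def)
  have lb: "(\<lambda>n. b (r n)) \<longlonglongrightarrow> snd l" using tendsto_snd[OF l(3)] by (simp add: o_def)
  have lx: "(\<lambda>n. x (r n)) \<longlonglongrightarrow> fst l"
  proof -
    have d: "(\<lambda>n. dist (a (r n)) (fst l)) \<longlonglongrightarrow> 0" by (rule tendsto_dist_iff[THEN iffD1, OF la])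
    have "(\<lambda>n. dist (x (r n)) (fst l)) \<longlonglongrightarrow> 0"
    proof (rule tendsto_sandwich[where f="\<lambda>n. 0" and h="\<lambda>n. 1 / real (Suc (r n)) + dist (a (r n)) (fst l)"])
      show "\<forall>\<^sub>F n in sequentially. 0 \<le> dist (x (r n)) (fst l)" by simp
      show "\<forall>\<^sub>F n in sequentially. dist (x (r n)) (fst l) \<le> 1 / real (Suc (r n)) + dist (a (r n)) (fst l)"
      proof (intro always_eventually allI)
        fix n
        show "dist (x (r n)) (fst l) \<le> 1 / real (Suc (r n)) + dist (a (r n)) (fst l)"
          using dist_triangle[of "x (r n)" "fst l" "a (r n)"] a(2)[of "r n"] by linarith
      qed
      show "(\<lambda>n. 0) \<longlonglongrightarrow> (0::real)" by simp
      show "(\<lambda>n. 1 / real (Suc (r n)) + dist (a (r n)) (fst l)) \<longlonglongrightarrow> 0"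
        using tendsto_add[OF lim0 d] by simp
    qed
    then show ?thesis by (rule tendsto_dist_iff[THEN iffD2])
  qed
  have ly: "(\<lambda>n. y (r n)) \<longlonglongrightarrow> snd l"
  proof -
    have d: "(\<lambda>n. dist (b (r n)) (snd l)) \<longlonglongrightarrow> 0" by (rule tendsto_dist_iff[THEN iffD1, OF lb])
    have "(\<lambda>n. dist (y (r n)) (snd l)) \<longlonglongrightarrow> 0"
    proof (rule tendsto_sandwich[where f="\<lambda>n. 0" and h="\<lambda>n. 1 / real (Suc (r n)) + dist (b (r n)) (snd l)"])
      show "\<forall>\<^sub>F n in sequentially. 0 \<le> dist (y (r n)) (snd l)" by simp
      show "\<forall>\<^sub>F n in sequentially. dist (y (r n)) (snd l) \<le> 1 / real (Suc (r n)) + dist (b (r n)) (snd l)"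
      proof (intro always_eventually allI)
        fix n
        show "dist (y (r n)) (snd l) \<le> 1 / real (Suc (r n)) + dist (b (r n)) (snd l)"
          using dist_triangle[of "y (r n)" "snd l" "b (r n)"] b(2)[of "r n"] by linarith
      qed
      show "(\<lambda>n. 0) \<longlonglongrightarrow> (0::real)" by simp
      show "(\<lambda>n. 1 / real (Suc (r n)) + dist (b (r n)) (snd l)) \<longlonglongrightarrow> 0"
        using tendsto_add[OF lim0 d] by simp
    qed
    then show ?thesis by (rule tendsto_dist_iff[THEN iffD2])
  qed
  have "\<delta> \<le> dist (fst l) (snd l)"
    by (rule tendsto_le[OF _ tendsto_dist[OF lx ly] tendsto_const]) (use xy(3) in auto)
  then have "fst l \<noteq> snd l" using dpos by auto
  then have "c l \<noteq> 0" using diag[of "fst l" "snd l"] by simp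
  then have "0 < c l" using not_gr_zero by blast
  then obtain t where t: "0 < t" "t < c l" using dense by blast
  have lxy: "(\<lambda>n. (x (r n), y (r n))) \<longlonglongrightarrow> l" using tendsto_Pair[OF lx ly] by simp
  have op: "open {z. t < c z}" using lsc by (simp add: lsc_def)
  have ev1: "\<forall>\<^sub>F n in sequentially. t < c (x (r n), y (r n))"
    using topological_tendstoD[OF lxy op] t(2) by simp
  have "(\<lambda>n. ennreal (1 / real (Suc (r n)))) \<longlonglongrightarrow> ennreal 0"
    by (rule tendsto_ennrealI[OF lim0])
  then have ev2: "\<forall>\<^sub>F n in sequentially. ennreal (1 / real (Suc (r n))) < t"
    using order_tendstoD(2) t(1) by fastforce
  have "\<forall>\<^sub>F n in sequentially. False"
    using ev1 ev2
  proof eventually_elim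
    case (elim n)
    then show False using xy(4)[of "r n"] by (meson less_trans not_less_iff_gr_or_eq)
  qed
  then show False by simp
qed

lemma ennreal_lessD': "ennreal a < ennreal b \<Longrightarrow> a < b"
  by (metis ennreal_less_iff ennreal_less_zero_iff ennreal_neg le_less_linear less_trans)

lemma tight_one:
  fixes P :: "'a::polish_space measure"
  assumes P: "P \<in> prob_measures" and e: "\<epsilon> > 0"
  shows "\<exists>K. compact K \<and> measure P (- K) < \<epsilon>"
proof -
  interpret prob_space P using pm_prob[OF P] .
  have sp: "space P = UNIV" using pm_space[OF P] .
  have "emeasure P UNIV = (SUP K \<in> {K. K \<subseteq> UNIV \<and> compact K}. emeasure P K)"
    by (rule inner_regular) (use pm_sets[OF P] sp in auto)
  moreover have "emeasure P UNIV = 1" using emeasure_space_1 sp by simp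
  moreover have "ennreal (1 - \<epsilon>) < 1" using e
    by (cases "\<epsilon> \<le> 1") (auto simp: ennreal_lessI ennreal_neg)
  ultimately obtain K where K: "compact K" "ennreal (1 - \<epsilon>) < emeasure P K"
    by (metis (no_types, lifting) less_SUP_iff mem_Collect_eq)
  have Ks: "K \<in> sets P" using pm_sets[OF P] compact_imp_closed[OF K(1)] by auto
  have "1 - \<epsilon> < measure P K"
    using K(2) by (simp add: emeasure_eq_measure ennreal_lessD')
  moreover have "measure P (- K) = 1 - measure P K"
    using prob_compl[OF Ks] sp by (simp add: Compl_eq_Diff_UNIV)
  ultimately show ?thesis using K(1) by auto
qed

lemma tight_pair:
  fixes \<mu> \<nu> :: "'a::polish_space measure"
  assumes "\<mu> \<in> prob_measures" "\<nu> \<in> prob_measures" "\<epsilon> > 0"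
  shows "\<exists>K. compact K \<and> K \<noteq> {} \<and> measure \<mu> (- K) < \<epsilon> \<and> measure \<nu> (- K) < \<epsilon>"
proof -
  obtain K1 where K1: "compact K1" "measure \<mu> (- K1) < \<epsilon>" using tight_one assms by blast
  obtain K2 where K2: "compact K2" "measure \<nu> (- K2) < \<epsilon>" using tight_one assms by blast
  define K where "K = insert undefined (K1 \<union> K2)"
  have cK: "compact K" using K1 K2 by (simp add: K_def compact_Un compact_insert)
  have "measure \<mu> (- K) \<le> measure \<mu> (- K1)"
  proof -
    interpret prob_space \<mu> using pm_prob assms by blast
    have "- K1 \<in> sets borel" using K1(1) by (intro borel_open open_Compl compact_imp_closed)
    then show ?thesis using pm_sets[OF assms(1)]
      by (intro finite_measure_mono) (auto simp: K_def)
  qed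
  moreover have "measure \<nu> (- K) \<le> measure \<nu> (- K2)"
  proof -
    interpret prob_space \<nu> using pm_prob assms by blast
    have "- K2 \<in> sets borel" using K2(1) by (intro borel_open open_Compl compact_imp_closed)
    then show ?thesis using pm_sets[OF assms(2)]
      by (intro finite_measure_mono) (auto simp: K_def)
  qed
  ultimately show ?thesis using K1 K2 cK by (auto simp: K_def)
qed

lemma cont_f: "continuous_on UNIV (\<lambda>x. max 0 (1 - real k * infdist x F))"
  by (intro continuous_intros continuous_on_max continuous_on_infdist continuous_on_id)

lemma lim_f_indicator:
  fixes F :: "'a::metric_space set"
  assumes "closed F" "F \<noteq> {}"
  shows "(\<lambda>k. max 0 (1 - real k * infdist x F)) \<longlonglongrightarrow> indicator F x"
proof (cases "x \<in> F")
  case True then show ?thesis by simp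
next
  case False
  then have d: "infdist x F > 0" using infdist_pos_not_in_closed assms by blast
  obtain N where N: "1 / infdist x F < real N" using reals_Archimedean2 by blast
  have "\<forall>\<^sub>F k in sequentially. max 0 (1 - real k * infdist x F) = indicator F x"
  proof (rule eventually_sequentiallyI[of N])
    fix k assume "N \<le> k"
    then have "1 / infdist x F < real k" using N by linarith
    then have "1 < real k * infdist x F" using d by (simp add: field_simps)
    then show "max 0 (1 - real k * infdist x F) = indicator F x" using False by simp
  qed
  then show ?thesis by (rule tendsto_eventually)
qed

lemma lim_integral_f:
  fixes F :: "'a::metric_space set"
  assumes P: "P \<in> prob_measures" and F: "closed F" "F \<noteq> {}"
  shows "(\<lambda>k. \<integral>x. max 0 (1 - real k * infdist x F) \<partial>P) \<longlonglongrightarrow> measure P F"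
proof -
  have Fs: "F \<in> sets P" using pm_sets[OF P] F(1) by simp
  have "(\<lambda>k. \<integral>x. max 0 (1 - real k * infdist x F) \<partial>P) \<longlonglongrightarrow> (\<integral>x. indicator F x \<partial>P)"
  proof (rule integral_dominated_convergence[where w="\<lambda>_. 1"])
    show "indicator F \<in> borel_measurable P" using Fs by simp
    show "(\<lambda>x. max 0 (1 - real k * infdist x F)) \<in> borel_measurable P" for k
      using pm_cont[OF P cont_f] .
    show "integrable P (\<lambda>_. 1::real)" by (rule pm_integrable[OF P, where B=1]) auto
    show "AE x in P. (\<lambda>k. max 0 (1 - real k * infdist x F)) \<longlonglongrightarrow> indicator F x"
      using lim_f_indicator[OF F] by simp
    show "AE x in P. norm (max 0 (1 - real k * infdist x F)) \<le> 1" for k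
      using infdist_nonneg[of x F for x] by (intro AE_I2) (simp add: mult_nonneg_nonneg)
  qed
  then show ?thesis using pm_space[OF P] by simp
qed

lemma eq_closed_integrals:
  fixes \<mu> \<nu> :: "'a::metric_space measure"
  assumes mu: "\<mu> \<in> prob_measures" and nu: "\<nu> \<in> prob_measures"
   and H: "\<And>F k. closed F \<Longrightarrow> (\<integral>x. max 0 (1 - real k * infdist x F) \<partial>\<mu>)
                                 = (\<integral>x. max 0 (1 - real k * infdist x F) \<partial>\<nu>)"
  shows "\<mu> = \<nu>"
proof -
  interpret M: prob_space \<mu> using pm_prob[OF mu] .
  interpret N: prob_space \<nu> using pm_prob[OF nu] .
  have meq: "measure \<mu> F = measure \<nu> F" if F: "closed F" for F
  proof (cases "F = {}")
    case True then show ?thesis by simp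
  next
    case False
    have e: "(\<lambda>k. \<integral>x. max 0 (1 - real k * infdist x F) \<partial>\<mu>) = (\<lambda>k. \<integral>x. max 0 (1 - real k * infdist x F) \<partial>\<nu>)"
      by (intro ext H[OF F])
    have l1: "(\<lambda>k. \<integral>x. max 0 (1 - real k * infdist x F) \<partial>\<nu>) \<longlonglongrightarrow> measure \<mu> F"
      using lim_integral_f[OF mu F False] unfolding e .
    show ?thesis by (rule LIMSEQ_unique[OF l1 lim_integral_f[OF nu F False]])
  qed
  have sb: "sets (borel :: 'a measure) = sigma_sets UNIV (Collect closed)"
    by (subst borel_eq_closed) (simp add: sets_measure_of)
  show ?thesis
  proof (rule measure_eqI_generator_eq[where E="Collect closed" and \<Omega>=UNIV and A="\<lambda>_. UNIV"])
    show "Int_stable (Collect closed)" by (auto simp: Int_stable_def closed_Int)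
    show "Collect closed \<subseteq> Pow UNIV" by simp
    show "emeasure \<mu> X = emeasure \<nu> X" if "X \<in> Collect closed" for X
      using meq[of X] that by (simp add: M.emeasure_eq_measure N.emeasure_eq_measure)
    show "sets \<mu> = sigma_sets UNIV (Collect closed)" using pm_sets[OF mu] sb by simp
    show "sets \<nu> = sigma_sets UNIV (Collect closed)" using pm_sets[OF nu] sb by simp
    show "range (\<lambda>_. UNIV) \<subseteq> Collect closed" by simp
    show "(\<Union>i::nat. UNIV) = (UNIV :: 'a set)" by simp
    show "emeasure \<mu> UNIV \<noteq> \<infinity>" for i :: nat by simp
  qed
qed

lemma fst_meas: "P \<in> prob_measures \<Longrightarrow> fst \<in> P \<rightarrow>\<^sub>M borel"
  by (rule pm_meas) (auto intro!: borel_measurable_continuous_onI continuous_intros)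

lemma snd_meas: "P \<in> prob_measures \<Longrightarrow> snd \<in> P \<rightarrow>\<^sub>M borel"
  by (rule pm_meas) (auto intro!: borel_measurable_continuous_onI continuous_intros)

lemma coupling_int:
  fixes g :: "'a::topological_space \<Rightarrow> real"
  assumes P: "P \<in> couplings A B" and g: "g \<in> borel_measurable borel"
  shows "(\<integral>z. g (fst z) \<partial>P) = (\<integral>x. g x \<partial>A)" "(\<integral>z. g (snd z) \<partial>P) = (\<integral>x. g x \<partial>B)"
proof -
  have Pp: "P \<in> prob_measures" and d1: "distr P borel fst = A" and d2: "distr P borel snd = B"
    using P by (auto simp: couplings_def)
  show "(\<integral>z. g (fst z) \<partial>P) = (\<integral>x. g x \<partial>A)"
    using integral_distr[OF fst_meas[OF Pp] g] d1 by simp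
  show "(\<integral>z. g (snd z) \<partial>P) = (\<integral>x. g x \<partial>B)"
    using integral_distr[OF snd_meas[OF Pp] g] d2 by simp
qed

lemma bounded_range_real: "(\<And>x. \<bar>g x\<bar> \<le> B) \<Longrightarrow> bounded (range (g :: 'a \<Rightarrow> real))"
  by (auto simp: bounded_iff intro!: exI[of _ B])

lemma f_props:
  fixes F :: "'a::metric_space set"
  shows "0 \<le> max 0 (1 - real k * infdist x F)" "max 0 (1 - real k * infdist x F) \<le> 1"
    "\<bar>max 0 (1 - real k * infdist x F) - max 0 (1 - real k * infdist y F)\<bar> \<le> real k * dist x y"
proof -
  show "0 \<le> max 0 (1 - real k * infdist x F)" by simp
  show "max 0 (1 - real k * infdist x F) \<le> 1" using infdist_nonneg[of x F] by simp
  have t: "\<bar>infdist x F - infdist y F\<bar> \<le> dist x y" by (rule infdist_triangle_abs)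
  have "\<bar>real k * infdist x F - real k * infdist y F\<bar> \<le> real k * dist x y"
    using mult_left_mono[OF t, of "real k"] by (simp add: abs_mult right_diff_distrib[symmetric])
  then show "\<bar>max 0 (1 - real k * infdist x F) - max 0 (1 - real k * infdist y F)\<bar> \<le> real k * dist x y"
    by linarith
qed

lemma key_bound:
  fixes \<mu> \<nu> :: "'a::polish_space measure" and c :: "'a \<times> 'a \<Rightarrow> ennreal"
  assumes lsc: "lsc c" and diag: "\<And>x1 x2. c (x1, x2) = 0 \<longleftrightarrow> x1 = x2"
    and mu: "\<mu> \<in> prob_measures" and nu: "\<nu> \<in> prob_measures"
    and eta: "\<And>n. \<eta> n \<in> prob_measures"
    and pi: "\<And>n. \<pi> n \<in> couplings (\<eta> n) \<nu>"
    and wc: "weak_conv \<eta> \<mu>"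
    and small: "\<And>n. (\<integral>\<^sup>+z. c z \<partial>\<pi> n) < ennreal (1 / Suc n)"
    and dpos: "\<delta> > 0" and epos: "\<epsilon> > 0"
  shows "\<bar>(\<integral>x. max 0 (1 - real k * infdist x F) \<partial>\<mu>) - (\<integral>x. max 0 (1 - real k * infdist x F) \<partial>\<nu>)\<bar>
           \<le> real k * \<delta> + 4 * \<epsilon>"
proof -
  define f where "f x = max 0 (1 - real k * infdist x F)" for x
  obtain K where K: "compact K" "K \<noteq> {}" "measure \<mu> (- K) < \<epsilon>" "measure \<nu> (- K) < \<epsilon>"
    using tight_pair[OF mu nu epos] by blast
  obtain r m where rm: "r > 0" "m > 0"
    and sep: "\<And>x y. infdist x K < r \<Longrightarrow> infdist y K < r \<Longrightarrow> \<delta> \<le> dist x y \<Longrightarrow> ennreal m \<le> c (x, y)"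
    using sep_lemma[OF lsc diag K(1) K(2) dpos] by blast
  define h where "h x = min 1 (infdist x K / r)" for x
  define w where "w z = enn2real (min (c z) (ennreal m))" for z
  have cmeas[measurable]: "c \<in> borel_measurable borel" by (rule lsc_meas[OF lsc])
  have wmeas: "w \<in> borel_measurable borel" unfolding w_def by measurable
  have fcont: "continuous_on UNIV f" unfolding f_def by (rule cont_f)
  have hcont: "continuous_on UNIV h" unfolding h_def
    by (intro continuous_intros continuous_on_min continuous_on_infdist continuous_on_id) (use rm in auto)
  have fmeas: "f \<in> borel_measurable borel" by (rule borel_measurable_continuous_onI[OF fcont])
  have hmeas: "h \<in> borel_measurable borel" by (rule borel_measurable_continuous_onI[OF hcont])
  have f01: "\<And>x. 0 \<le> f x" "\<And>x. f x \<le> 1" unfolding f_def using f_props by auto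
  have flip: "\<And>x y. \<bar>f x - f y\<bar> \<le> real k * dist x y" unfolding f_def using f_props by auto
  have h01: "\<And>x. 0 \<le> h x" "\<And>x. h x \<le> 1" unfolding h_def using rm
    by (auto intro!: divide_nonneg_pos simp: infdist_nonneg)
  have hK: "\<And>x. h x \<le> indicator (- K) x" unfolding h_def by (auto simp: indicator_def)
  have wfin: "\<And>z. min (c z) (ennreal m) \<noteq> \<top>"
    by (metis ennreal_less_top min.cobounded2 order.strict_trans1 order.strict_implies_not_eq)
  have w0m: "\<And>z. 0 \<le> w z" "\<And>z. w z \<le> m" unfolding w_def
    using rm by (auto simp: enn2real_leI min.coboundedI2)
  have wenn: "\<And>z. ennreal (w z) = min (c z) (ennreal m)" unfolding w_def using wfin by (simp add: less_top[symmetric])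
  have pw: "\<bar>f x - f y\<bar> \<le> real k * \<delta> + 2 * h x + 2 * h y + (2 / m) * w (x, y)" for x y
  proof -
    have nn: "0 \<le> 2 * h x" "0 \<le> 2 * h y" "0 \<le> (2 / m) * w (x, y)"
      using h01 w0m rm by auto
    have b1: "\<bar>f x - f y\<bar> \<le> 1" using f01[of x] f01[of y] by auto
    have kd: "0 \<le> real k * \<delta>" using dpos by simp
    show ?thesis
    proof (cases "dist x y < \<delta>")
      case True
      have "real k * dist x y \<le> real k * \<delta>" using True by (intro mult_left_mono) auto
      then show ?thesis using flip[of x y] nn by linarith
    next
      case nd: False
      show ?thesis
      proof (cases "infdist x K < r")
        case False
        then have "h x = 1" unfolding h_def using rm by (auto simp: min_def field_simps)
        then show ?thesis using b1 nn kd by linarith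
      next
        case x: True
        show ?thesis
        proof (cases "infdist y K < r")
          case False
          then have "h y = 1" unfolding h_def using rm by (auto simp: min_def field_simps)
          then show ?thesis using b1 nn kd by linarith
        next
          case y: True
          have "ennreal m \<le> c (x, y)" using sep[OF x y] nd by simp
          then have "w (x, y) = m" unfolding w_def using rm by (simp add: min_def)
          then have "(2 / m) * w (x, y) = 2" using rm by simp
          then show ?thesis using b1 nn kd by linarith
        qed
      qed
    qed
  qed
  define L where "L n = \<bar>(\<integral>x. f x \<partial>\<eta> n) - (\<integral>x. f x \<partial>\<nu>)\<bar>" for n
  define R where "R n = real k * \<delta> + 2 * (\<integral>x. h x \<partial>\<eta> n) + 2 * (\<integral>x. h x \<partial>\<nu>) + (2 / m) * (\<integral>z. w z \<partial>\<pi> n)" for n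
  have wint: "(\<integral>z. w z \<partial>\<pi> n) \<le> 1 / Suc n" "0 \<le> (\<integral>z. w z \<partial>\<pi> n)" for n
  proof -
    have Pp: "\<pi> n \<in> prob_measures" using pi by (simp add: couplings_def)
    have wP: "w \<in> borel_measurable (\<pi> n)" by (rule pm_meas[OF Pp wmeas])
    have iw: "integrable (\<pi> n) w" by (rule pm_integrable[OF Pp wP, where B=m]) (use w0m in auto)
    have "ennreal (\<integral>z. w z \<partial>\<pi> n) = (\<integral>\<^sup>+z. ennreal (w z) \<partial>\<pi> n)"
      by (rule nn_integral_eq_integral[OF iw, symmetric]) (use w0m in auto)
    also have "\<dots> \<le> (\<integral>\<^sup>+z. c z \<partial>\<pi> n)" unfolding wenn by (intro nn_integral_mono) simp
    also have "\<dots> < ennreal (1 / Suc n)" by (rule small)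
    finally show "(\<integral>z. w z \<partial>\<pi> n) \<le> 1 / Suc n" by (auto dest: ennreal_lessD')
    show "0 \<le> (\<integral>z. w z \<partial>\<pi> n)" using w0m by (intro integral_nonneg_AE) auto
  qed
  have LR: "L n \<le> R n" for n
  proof -
    have Pp: "\<pi> n \<in> prob_measures" using pi by (simp add: couplings_def)
    interpret prob_space "\<pi> n" using pm_prob[OF Pp] .
    have mf1: "(\<lambda>z. f (fst z)) \<in> borel_measurable (\<pi> n)" by (rule measurable_compose[OF fst_meas[OF Pp] fmeas])
    have mf2: "(\<lambda>z. f (snd z)) \<in> borel_measurable (\<pi> n)" by (rule measurable_compose[OF snd_meas[OF Pp] fmeas])
    have mh1: "(\<lambda>z. h (fst z)) \<in> borel_measurable (\<pi> n)" by (rule measurable_compose[OF fst_meas[OF Pp] hmeas])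
    have mh2: "(\<lambda>z. h (snd z)) \<in> borel_measurable (\<pi> n)" by (rule measurable_compose[OF snd_meas[OF Pp] hmeas])
    have mw: "w \<in> borel_measurable (\<pi> n)" by (rule pm_meas[OF Pp wmeas])
    have if1: "integrable (\<pi> n) (\<lambda>z. f (fst z))" by (rule pm_integrable[OF Pp mf1, where B=1]) (use f01 in auto)
    have if2: "integrable (\<pi> n) (\<lambda>z. f (snd z))" by (rule pm_integrable[OF Pp mf2, where B=1]) (use f01 in auto)
    have ih1: "integrable (\<pi> n) (\<lambda>z. h (fst z))" by (rule pm_integrable[OF Pp mh1, where B=1]) (use h01 in auto)
    have ih2: "integrable (\<pi> n) (\<lambda>z. h (snd z))" by (rule pm_integrable[OF Pp mh2, where B=1]) (use h01 in auto)
    have iw: "integrable (\<pi> n) w" by (rule pm_integrable[OF Pp mw, where B=m]) (use w0m in auto)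
    have i0: "integrable (\<pi> n) (\<lambda>z. real k * \<delta>)" by simp
    have i1: "integrable (\<pi> n) (\<lambda>z. 2 * h (fst z))" using ih1 by simp
    have i2: "integrable (\<pi> n) (\<lambda>z. 2 * h (snd z))" using ih2 by simp
    have i3: "integrable (\<pi> n) (\<lambda>z. (2 / m) * w z)" using iw by simp
    have i01: "integrable (\<pi> n) (\<lambda>z. real k * \<delta> + 2 * h (fst z))"
      by (rule Bochner_Integration.integrable_add[OF i0 i1])
    have i012: "integrable (\<pi> n) (\<lambda>z. real k * \<delta> + 2 * h (fst z) + 2 * h (snd z))"
      by (rule Bochner_Integration.integrable_add[OF i01 i2])
    have iR: "integrable (\<pi> n) (\<lambda>z. real k * \<delta> + 2 * h (fst z) + 2 * h (snd z) + (2 / m) * w z)"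
      by (rule Bochner_Integration.integrable_add[OF i012 i3])
    have "L n = \<bar>\<integral>z. f (fst z) - f (snd z) \<partial>\<pi> n\<bar>"
      unfolding L_def using coupling_int[OF pi fmeas] Bochner_Integration.integral_diff[OF if1 if2] by simp
    also have "\<dots> \<le> (\<integral>z. \<bar>f (fst z) - f (snd z)\<bar> \<partial>\<pi> n)" by (rule integral_abs_bound)
    also have "\<dots> \<le> (\<integral>z. real k * \<delta> + 2 * h (fst z) + 2 * h (snd z) + (2 / m) * w z \<partial>\<pi> n)"
      using pw by (intro integral_mono iR) (auto intro!: if1 if2)
    also have "\<dots> = R n"
      unfolding R_def using coupling_int[OF pi hmeas] ih1 ih2 iw i1 i2 i3 i0 i01 i012
      by (simp add: Bochner_Integration.integral_add prob_space)
    finally show ?thesis .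
  qed
  have wc_f: "(\<lambda>n. \<integral>x. f x \<partial>\<eta> n) \<longlonglongrightarrow> (\<integral>x. f x \<partial>\<mu>)"
    using wc fcont bounded_range_real[of f 1] f01 unfolding weak_conv_def by auto
  have wc_h: "(\<lambda>n. \<integral>x. h x \<partial>\<eta> n) \<longlonglongrightarrow> (\<integral>x. h x \<partial>\<mu>)"
    using wc hcont bounded_range_real[of h 1] h01 unfolding weak_conv_def by auto
  have w0: "(\<lambda>n. \<integral>z. w z \<partial>\<pi> n) \<longlonglongrightarrow> 0"
  proof (rule tendsto_sandwich[where f="\<lambda>n. 0" and h="\<lambda>n. 1 / real (Suc n)"])
    show "\<forall>\<^sub>F n in sequentially. 0 \<le> (\<integral>z. w z \<partial>\<pi> n)" using wint(2) by simp
    show "\<forall>\<^sub>F n in sequentially. (\<integral>z. w z \<partial>\<pi> n) \<le> 1 / real (Suc n)" using wint(1) by simp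
    show "(\<lambda>n. 0) \<longlonglongrightarrow> (0::real)" by simp
    show "(\<lambda>n. 1 / real (Suc n)) \<longlonglongrightarrow> 0" using LIMSEQ_Suc[OF lim_1_over_n] by simp
  qed
  have Llim: "L \<longlonglongrightarrow> \<bar>(\<integral>x. f x \<partial>\<mu>) - (\<integral>x. f x \<partial>\<nu>)\<bar>"
    unfolding L_def by (intro tendsto_intros wc_f)
  have Rlim: "R \<longlonglongrightarrow> real k * \<delta> + 2 * (\<integral>x. h x \<partial>\<mu>) + 2 * (\<integral>x. h x \<partial>\<nu>) + (2 / m) * 0"
    unfolding R_def by (intro tendsto_intros wc_h w0)
  have "\<bar>(\<integral>x. f x \<partial>\<mu>) - (\<integral>x. f x \<partial>\<nu>)\<bar> \<le> real k * \<delta> + 2 * (\<integral>x. h x \<partial>\<mu>) + 2 * (\<integral>x. h x \<partial>\<nu>) + (2 / m) * 0"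
    by (rule LIMSEQ_le[OF Llim Rlim]) (use LR in auto)
  moreover have hb: "(\<integral>x. h x \<partial>P) \<le> measure P (- K)" if P: "P \<in> prob_measures" for P
  proof -
    have Ks: "- K \<in> sets P" using pm_sets[OF P] K(1)
      by (simp add: borel_open open_Compl compact_imp_closed)
    have "(\<integral>x. h x \<partial>P) \<le> (\<integral>x. indicator (- K) x \<partial>P)"
      using hK h01 Ks
      by (intro integral_mono pm_integrable[OF P, where B=1] pm_meas[OF P hmeas]) auto
    also have "\<dots> = measure P (- K)" using pm_space[OF P] by simp
    finally show ?thesis .
  qed
  ultimately show ?thesis using hb[OF mu] hb[OF nu] K(3) K(4) unfolding f_def by linarith
qed

lemma small_abs_zero:
  fixes A :: real and k :: nat
  assumes "\<And>\<delta> \<epsilon>. \<delta> > 0 \<Longrightarrow> \<epsilon> > 0 \<Longrightarrow> \<bar>A\<bar> \<le> real k * \<delta> + 4 * \<epsilon>"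
  shows "A = 0"
proof (rule ccontr)
  assume "A \<noteq> 0"
  then have a: "\<bar>A\<bar> > 0" by simp
  define \<delta> where "\<delta> = \<bar>A\<bar> / (4 * (real k + 1))"
  define \<epsilon> where "\<epsilon> = \<bar>A\<bar> / 16"
  have d: "\<delta> > 0" "\<epsilon> > 0" using a by (auto simp: \<delta>_def \<epsilon>_def)
  have "real k * \<delta> \<le> \<bar>A\<bar> / 4"
    using a by (simp add: \<delta>_def field_simps)
  then show False using assms[OF d] a by (simp add: \<epsilon>_def)
qed

theorem theorem1:
  fixes D :: "'a::polish_space measure \<Rightarrow> 'a measure \<Rightarrow> ennreal"
    and c :: "'a \<times> 'a \<Rightarrow> ennreal"
  assumes "pre_divergence D"
    and "lsc c"
    and "\<And>Ms \<mu>. (\<forall>n. Ms n \<in> prob_measures) \<Longrightarrow> \<mu> \<in> prob_measures \<Longrightarrow>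
           (\<lambda>n. D (Ms n) \<mu>) \<longlonglongrightarrow> 0 \<Longrightarrow> weak_conv Ms \<mu>"
    and "\<And>x1 x2. c (x1, x2) = 0 \<longleftrightarrow> x1 = x2"
    and "\<mu> \<in> prob_measures" and "\<nu> \<in> prob_measures"
  shows "D_c D c \<nu> \<mu> = 0 \<longleftrightarrow> \<nu> = \<mu>"
proof
  assume H: "D_c D c \<nu> \<mu> = 0"
  have "\<forall>n::nat. \<exists>\<eta> \<pi>. \<eta> \<in> prob_measures \<and> \<pi> \<in> couplings \<eta> \<nu> \<and> D \<eta> \<mu> < ennreal (1 / Suc n)
          \<and> (\<integral>\<^sup>+z. c z \<partial>\<pi>) < ennreal (1 / Suc n)"
  proof
    fix n :: nat
    have "(INF \<eta>\<in>prob_measures. D \<eta> \<mu> + OT_cost c \<eta> \<nu>) < ennreal (1 / Suc n)"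
      using H by (simp add: D_c_def)
    then obtain \<eta> where e: "\<eta> \<in> prob_measures" "D \<eta> \<mu> + OT_cost c \<eta> \<nu> < ennreal (1 / Suc n)"
      by (auto simp: INF_less_iff)
    then have "OT_cost c \<eta> \<nu> < ennreal (1 / Suc n)"
      by (metis add.commute add_increasing2 zero_le linorder_not_le order.trans order_refl)
    then obtain \<pi> where p: "\<pi> \<in> couplings \<eta> \<nu>" "(\<integral>\<^sup>+z. c z \<partial>\<pi>) < ennreal (1 / Suc n)"
      by (auto simp: OT_cost_def INF_less_iff)
    have "D \<eta> \<mu> < ennreal (1 / Suc n)" using e(2)
      by (metis add_increasing2 zero_le linorder_not_le order.trans order_refl)
    then show "\<exists>\<eta> \<pi>. \<eta> \<in> prob_measures \<and> \<pi> \<in> couplings \<eta> \<nu> \<and> D \<eta> \<mu> < ennreal (1 / Suc n)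
          \<and> (\<integral>\<^sup>+z. c z \<partial>\<pi>) < ennreal (1 / Suc n)" using e(1) p by blast
  qed
  then obtain \<eta> \<pi> where ep: "\<And>n. \<eta> n \<in> prob_measures" "\<And>n. \<pi> n \<in> couplings (\<eta> n) \<nu>"
    "\<And>n. D (\<eta> n) \<mu> < ennreal (1 / Suc n)" "\<And>n. (\<integral>\<^sup>+z. c z \<partial>\<pi> n) < ennreal (1 / Suc n)"
    by metis
  have lim: "(\<lambda>n. ennreal (1 / real (Suc n))) \<longlonglongrightarrow> ennreal 0"
    by (rule tendsto_ennrealI) (use LIMSEQ_Suc[OF lim_1_over_n] in simp)
  have "(\<lambda>n. D (\<eta> n) \<mu>) \<longlonglongrightarrow> 0"
  proof (rule tendsto_sandwich[where f="\<lambda>n. 0" and h="\<lambda>n. ennreal (1 / real (Suc n))"])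
    show "\<forall>\<^sub>F n in sequentially. 0 \<le> D (\<eta> n) \<mu>" by simp
    show "\<forall>\<^sub>F n in sequentially. D (\<eta> n) \<mu> \<le> ennreal (1 / real (Suc n))"
      using ep(3) by (simp add: less_imp_le)
    show "(\<lambda>n. 0) \<longlonglongrightarrow> (0::ennreal)" by simp
    show "(\<lambda>n. ennreal (1 / real (Suc n))) \<longlonglongrightarrow> 0" using lim by simp
  qed
  then have wc: "weak_conv \<eta> \<mu>" using assms(3) ep(1) assms(5) by blast
  have "\<mu> = \<nu>"
  proof (rule eq_closed_integrals[OF assms(5) assms(6)])
    fix F :: "'a set" and k :: nat
    assume "closed F"
    show "(\<integral>x. max 0 (1 - real k * infdist x F) \<partial>\<mu>) = (\<integral>x. max 0 (1 - real k * infdist x F) \<partial>\<nu>)"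
      using small_abs_zero[OF key_bound[OF assms(2) assms(4) assms(5) assms(6) ep(1) ep(2) wc ep(4)]]
      by simp
  qed
  then show "\<nu> = \<mu>" by simp
next
  assume E: "\<nu> = \<mu>"
  have mu: "\<mu> \<in> prob_measures" by (rule assms(5))
  interpret prob_space \<mu> using pm_prob[OF mu] .
  define \<pi> where "\<pi> = distr \<mu> borel (\<lambda>x. (x, x))"
  have dm: "(\<lambda>x. (x, x)) \<in> \<mu> \<rightarrow>\<^sub>M borel"
    by (rule pm_meas[OF mu]) (auto intro!: borel_measurable_continuous_onI continuous_intros)
  have cm[measurable]: "c \<in> borel_measurable borel" by (rule lsc_meas[OF assms(2)])
  have pp: "\<pi> \<in> prob_measures"
    unfolding prob_measures_def \<pi>_def using prob_space_distr[OF dm] by simp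
  have m1: "distr \<pi> borel fst = \<mu>"
    unfolding \<pi>_def
    by (simp add: distr_distr[OF _ dm] o_def pm_distr_id[OF mu] borel_measurable_continuous_onI continuous_intros)
  have m2: "distr \<pi> borel snd = \<mu>"
    unfolding \<pi>_def
    by (simp add: distr_distr[OF _ dm] o_def pm_distr_id[OF mu] borel_measurable_continuous_onI continuous_intros)
  have cp: "\<pi> \<in> couplings \<mu> \<mu>" using pp m1 m2 by (simp add: couplings_def)
  have "(\<integral>\<^sup>+z. c z \<partial>\<pi>) = (\<integral>\<^sup>+x. c (x, x) \<partial>\<mu>)"
    unfolding \<pi>_def by (rule nn_integral_distr[OF dm]) simp
  also have "\<dots> = (\<integral>\<^sup>+x. 0 \<partial>\<mu>)" using assms(4) by (intro nn_integral_cong) simp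
  also have "\<dots> = 0" by simp
  finally have i0: "(\<integral>\<^sup>+z. c z \<partial>\<pi>) = 0" .
  have "OT_cost c \<mu> \<mu> \<le> (\<integral>\<^sup>+z. c z \<partial>\<pi>)" unfolding OT_cost_def by (rule INF_lower[OF cp])
  then have "OT_cost c \<mu> \<mu> = 0" using i0 by simp
  moreover have "D \<mu> \<mu> = 0" using assms(1) mu by (simp add: pre_divergence_def)
  moreover have "D_c D c \<mu> \<mu> \<le> D \<mu> \<mu> + OT_cost c \<mu> \<mu>"
    unfolding D_c_def by (rule INF_lower[OF mu])
  ultimately have "D_c D c \<mu> \<mu> \<le> 0" by simp
  then show "D_c D c \<nu> \<mu> = 0" using E by simp
qed

end
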